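(* In a public goods economy (as in the context), let $\mathbf{a}$ be an outcome and suppose there is a path $P$ of outcomes with endpoints $\mathbf{x},\mathbf{y}$ such that $\mathbf{u}(\mathbf{p})\le\mathbf{u}(\mathbf{a})$ for every $\mathbf{p}\in P$. If $\mathbf{a}'$ is a deviation from $\mathbf{a}$ for some coalition $C$ satisfying $\mathbf{a}'\lneq\mathbf{x}$, then $\mathbf{a}'$ also satisfies $\mathbf{a}'\lneq\mathbf{y}$.
   Context: Agents $N=\{1,\dots,n\}$; outcomes are vectors in $[0,1]^n$. Vector orderings: $\mathbf{x}\ge\mathbf{y}$ means $x_i\ge y_i$ for all $i$; $\mathbf{x}>\mathbf{y}$ means $x_i>y_i$ for all $i$; $\mathbf{x}\gneq\mathbf{y}$ means $\mathbf{x}\ge\mathbf{y}$ and $x_j>y_j$ for some $j$ ($\mathbf{x}\lneq\mathbf{y}$ means $\mathbf{y}\gneq\mathbf{x}$). For $C\subseteq N$, $\mathbf{v}_C$ is the restriction of $\mathbf{v}$ to coordinates in $C$. The utility function $\mathbf{u}:[0,1]^n\to[0,1]^n$ is continuous, concave, and has positive externalities: whenever $\mathbf{a}\gneq\mathbf{a}'$ and $a_i=a'_i$, then $u_i(\mathbf{a})>u_i(\mathbf{a}')$. A coalition is a nonempty $C\subseteq N$; $\mathbf{a}'$ is a deviation from $\mathbf{a}$ for $C$ if $\mathbf{a}'_{N\setminus C}=\mathbf{0}$ and $\mathbf{u}_C(\mathbf{a}')>\mathbf{u}_C(\mathbf{a})$. A path with endpoints $\mathbf{x},\mathbf{y}$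 is the image of a continuous $f:[0,1]\to[0,1]^n$ with $f(0)=\mathbf{x}$, $f(1)=\mathbf{y}$. *)

theory Defs
  imports "HOL-Analysis.Analysis"
begin

text \<open>Outcomes are vectors in the unit cube [0,1]^n, indexed by a finite type 'n of agents.\<close>

definition unit_cube :: "(real ^ 'n) set" where
  "unit_cube = {x. \<forall>i. 0 \<le> x $ i \<and> x $ i \<le> 1}"

definition vgneq :: "real ^ 'n \<Rightarrow> real ^ 'n \<Rightarrow> bool" where
  "vgneq x y \<longleftrightarrow> (\<forall>i. x $ i \<ge> y $ i) \<and> (\<exists>j. x $ j > y $ j)"

definition public_goods_utility :: "(real ^ 'n \<Rightarrow> real ^ 'n) \<Rightarrow> bool" where
  "public_goods_utility u \<longleftrightarrow>
     u ` unit_cube \<subseteq> unit_cube \<and>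
     continuous_on unit_cube u \<and>
     (\<forall>i. concave_on unit_cube (\<lambda>x. u x $ i)) \<and>
     (\<forall>a\<in>unit_cube. \<forall>a'\<in>unit_cube. \<forall>i.
        vgneq a a' \<and> a $ i = a' $ i \<longrightarrow> u a $ i > u a' $ i)"

definition deviation ::
  "(real ^ 'n \<Rightarrow> real ^ 'n) \<Rightarrow> 'n set \<Rightarrow> real ^ 'n \<Rightarrow> real ^ 'n \<Rightarrow> bool" where
  "deviation u C a a' \<longleftrightarrow> C \<noteq> {} \<and> a' \<in> unit_cube \<and>
     (\<forall>i. i \<notin> C \<longrightarrow> a' $ i = 0) \<and> (\<forall>i\<in>C. u a' $ i > u a $ i)"

definition is_path_between :: "(real ^ 'n) set \<Rightarrow> real ^ 'n \<Rightarrow> real ^ 'n \<Rightarrow> bool" where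
  "is_path_between P x y \<longleftrightarrow>
     (\<exists>f :: real \<Rightarrow> real ^ 'n. continuous_on {0..1} f \<and> f ` {0..1} \<subseteq> unit_cube \<and>
        f 0 = x \<and> f 1 = y \<and> P = f ` {0..1})"

end

theory Submission
  imports Defs
begin

lemma cont_Min:
  fixes h :: "'i \<Rightarrow> real \<Rightarrow> real"
  assumes "finite C" "C \<noteq> {}" "\<And>i. i \<in> C \<Longrightarrow> continuous_on S (h i)"
  shows "continuous_on S (\<lambda>t. Min ((\<lambda>i. h i t) ` C))"
  using assms
proof (induction C rule: finite_ne_induct)
  case (singleton x)
  then show ?case by simp
next
  case (insert x F)
  have e: "(\<lambda>t. Min ((\<lambda>i. h i t) ` insert x F)) = (\<lambda>t. min (h x t) (Min ((\<lambda>i. h i t) ` F)))"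
    using insert by (auto simp: Min_insert)
  show ?case unfolding e using insert by (intro continuous_on_min) auto
qed

theorem lemma2:
  fixes u :: "real ^ 'n \<Rightarrow> real ^ 'n"
    and a a' x y :: "real ^ 'n"
    and P :: "(real ^ 'n) set"
    and C :: "'n set"
  assumes "public_goods_utility u"
    and "a \<in> unit_cube"
    and "is_path_between P x y"
    and "\<forall>p\<in>P. \<forall>i. u p $ i \<le> u a $ i"
    and "deviation u C a a'"
    and "vgneq x a'"
  shows "vgneq y a'"
proof -
  obtain f :: "real \<Rightarrow> real ^ 'n" where f: "continuous_on {0..1} f" "f ` {0..1} \<subseteq> unit_cube"
    "f 0 = x" "f 1 = y" "P = f ` {0..1}"
    using assms(3) unfolding is_path_between_def by blast
  have Cne: "C \<noteq> {}" and a'c: "a' \<in> unit_cube" and out: "\<And>i. i \<notin> C \<Longrightarrow> a' $ i = 0"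
    and dev: "\<And>i. i \<in> C \<Longrightarrow> u a' $ i > u a $ i"
    using assms(5) unfolding deviation_def by auto
  have pe: "\<And>b b' i. b \<in> unit_cube \<Longrightarrow> b' \<in> unit_cube \<Longrightarrow> vgneq b b' \<Longrightarrow> b $ i = b' $ i \<Longrightarrow> u b $ i > u b' $ i"
    using assms(1) unfolding public_goods_utility_def by blast
  have finC: "finite C" by simp
  define g where "g t = Min ((\<lambda>i. f t $ i - a' $ i) ` C)" for t
  have gcont: "continuous_on {0..1} g"
    unfolding g_def
    by (rule cont_Min[OF finC Cne]) (intro continuous_intros continuous_on_component f(1))
  have key: "g t \<noteq> 0" if t: "t \<in> {0..1}" "g t \<ge> 0" for t
  proof
    assume g0: "g t = 0"
    have inP: "f t \<in> P" using t f(5) by auto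
    have fc: "f t \<in> unit_cube" using t f(2) by auto
    have ge: "\<forall>i\<in>C. f t $ i - a' $ i \<ge> g t" unfolding g_def using finC by auto
    obtain i0 where i0: "i0 \<in> C" "f t $ i0 - a' $ i0 = g t"
    proof -
      have "g t \<in> (\<lambda>i. f t $ i - a' $ i) ` C"
        unfolding g_def using finC Cne by (intro Min_in) auto
      then show ?thesis using that by auto
    qed
    have geq: "\<forall>i. f t $ i \<ge> a' $ i"
    proof
      fix i show "f t $ i \<ge> a' $ i"
      proof (cases "i \<in> C")
        case True then show ?thesis using ge g0 by auto
      next
        case False then show ?thesis using out fc unfolding unit_cube_def by auto
      qed
    qed
    have ub: "u (f t) $ i0 \<le> u a $ i0" using assms(4) inP by auto
    show False
    proof (cases "vgneq (f t) a'")
      case True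
      have "u (f t) $ i0 > u a' $ i0" using pe[OF fc a'c True] i0 g0 by auto
      then show False using ub dev[OF i0(1)] by auto
    next
      case False
      then have "f t = a'" using geq unfolding vgneq_def by (simp add: vec_eq_iff) (meson antisym not_less)
      then show False using ub dev[OF i0(1)] by auto
    qed
  qed
  have g0: "g 0 > 0"
  proof -
    have "\<forall>i\<in>C. x $ i - a' $ i \<ge> 0" using assms(6) unfolding vgneq_def by auto
    then have "g 0 \<ge> 0" unfolding g_def f(3) using finC Cne by auto
    then show ?thesis using key[of 0] by auto
  qed
  have g1: "g 1 > 0"
  proof (rule ccontr)
    assume "\<not> g 1 > 0"
    then obtain t where "0 \<le> t" "t \<le> 1" "g t = 0"
      using IVT2'[of g 1 0 0] gcont g0 by auto
    then show False using key[of t] by auto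
  qed
  have yC: "\<forall>i\<in>C. y $ i > a' $ i"
  proof
    fix i assume i: "i \<in> C"
    have "g 1 \<le> f 1 $ i - a' $ i" unfolding g_def using finC i by auto
    then show "y $ i > a' $ i" using g1 f(4) by auto
  qed
  have yc: "y \<in> unit_cube" using f(2) f(4) by auto
  show ?thesis unfolding vgneq_def
  proof
    show "\<forall>i. a' $ i \<le> y $ i"
    proof
      fix i show "a' $ i \<le> y $ i"
        using yC out yc unfolding unit_cube_def by (cases "i \<in> C") force+
    qed
    show "\<exists>j. a' $ j < y $ j" using yC Cne by auto
  qed
qed

end
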